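(* A graph $G$ is 0-1 strongly EFX-orientable if and only if the following holds: for every subgraph $H\subseteq G$ that is a forest, with connected components (trees) $T_1,\dots,T_k$, there exist vertices $x_1\in T_1,\dots,x_k\in T_k$ such that $\bigcup_{i=1}^k N_H(x_i)$ is an independent set in $G$. Here $N_H(x)$ denotes the set of neighbors of $x$ in $H$.
   Context: All graphs are finite and simple. For a graph $G=(V,E)$ and $v\in V$, $E(v)$ is the set of edges incident to $v$. A graphical instance on $G$ assigns to each vertex $v$ a valuation $f_v:2^E\to\mathbb{R}_{\ge 0}$ that is monotone ($A\subseteq B\Rightarrow f_v(A)\le f_v(B)$) and satisfies $f_v(X)=f_v(X\cap E(v))$ for all $X\subseteq E$. An orientation of $G$ chooses for each edge one of its endpoints as its head; it yields the allocation in which each vertex $v$ receives the bundle $X_v$ of edges whose head is $v$. The orientation is EFX if for all $u,v\in V$ and every $g\in X_v$, $f_u(X_u)\ge f_u(X_v\setminus\{g\})$. A graph $G$ is 0-1 strongly EFX-orientable if for every graphical instance on $G$ in which each $f_v$ is additive ($f_v(X)=\sum_{e\in X}f_v(\{e\})$) with $f_v(\{e\})\in\{0,1\}$ for all edges $e$, there exists an EFX orientation. *)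

theory Defs
  imports Complex_Main
begin

definition simple_graph :: "'a set \<Rightarrow> 'a set set \<Rightarrow> bool" where
  "simple_graph V E \<longleftrightarrow> finite V \<and>
     (\<forall>e\<in>E. \<exists>u v. u \<noteq> v \<and> e = {u, v} \<and> u \<in> V \<and> v \<in> V)"

definition incident_edges :: "'a set set \<Rightarrow> 'a \<Rightarrow> 'a set set" where
  "incident_edges E v = {e \<in> E. v \<in> e}"

definition graphical_instance :: "'a set \<Rightarrow> 'a set set \<Rightarrow> ('a \<Rightarrow> 'a set set \<Rightarrow> real) \<Rightarrow> bool" where
  "graphical_instance V E f \<longleftrightarrow>
     (\<forall>v\<in>V. (\<forall>X Y. X \<subseteq> E \<longrightarrow> Y \<subseteq> E \<longrightarrow> X \<subseteq> Y \<longrightarrow> f v X \<le> f v Y)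
           \<and> (\<forall>X. X \<subseteq> E \<longrightarrow> 0 \<le> f v X)
           \<and> (\<forall>X. X \<subseteq> E \<longrightarrow> f v X = f v (X \<inter> incident_edges E v)))"

definition additive_01_instance :: "'a set \<Rightarrow> 'a set set \<Rightarrow> ('a \<Rightarrow> 'a set set \<Rightarrow> real) \<Rightarrow> bool" where
  "additive_01_instance V E f \<longleftrightarrow> graphical_instance V E f \<and>
     (\<forall>v\<in>V. (\<forall>X. X \<subseteq> E \<longrightarrow> f v X = (\<Sum>e\<in>X. f v {e}))
           \<and> (\<forall>e\<in>E. f v {e} \<in> {0, 1}))"

text \<open>An orientation picks a head h e in each edge e; vertex v receives the edges with head v.\<close>
definition orientation :: "'a set set \<Rightarrow> ('a set \<Rightarrow> 'a) \<Rightarrow> bool" where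
  "orientation E h \<longleftrightarrow> (\<forall>e\<in>E. h e \<in> e)"

definition bundle_of :: "'a set set \<Rightarrow> ('a set \<Rightarrow> 'a) \<Rightarrow> 'a \<Rightarrow> 'a set set" where
  "bundle_of E h v = {e \<in> E. h e = v}"

definition EFX_orientation :: "'a set \<Rightarrow> 'a set set \<Rightarrow> ('a \<Rightarrow> 'a set set \<Rightarrow> real) \<Rightarrow> ('a set \<Rightarrow> 'a) \<Rightarrow> bool" where
  "EFX_orientation V E f h \<longleftrightarrow> orientation E h \<and>
     (\<forall>u\<in>V. \<forall>v\<in>V. \<forall>g\<in>bundle_of E h v. f u (bundle_of E h u) \<ge> f u (bundle_of E h v - {g}))"

definition strongly_EFX_orientable_01 :: "'a set \<Rightarrow> 'a set set \<Rightarrow> bool" where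
  "strongly_EFX_orientable_01 V E \<longleftrightarrow>
     (\<forall>f. additive_01_instance V E f \<longrightarrow> (\<exists>h. EFX_orientation V E f h))"

definition subgraph :: "'a set \<Rightarrow> 'a set set \<Rightarrow> 'a set \<Rightarrow> 'a set set \<Rightarrow> bool" where
  "subgraph W F V E \<longleftrightarrow> W \<subseteq> V \<and> F \<subseteq> E \<and> (\<forall>e\<in>F. e \<subseteq> W)"

definition is_cycle :: "'a set set \<Rightarrow> 'a list \<Rightarrow> bool" where
  "is_cycle F cs \<longleftrightarrow> length cs \<ge> 3 \<and> distinct cs \<and>
     (\<forall>i < length cs. {cs ! i, cs ! ((i + 1) mod length cs)} \<in> F)"

definition forest :: "'a set set \<Rightarrow> bool" where
  "forest F \<longleftrightarrow> \<not> (\<exists>cs. is_cycle F cs)"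

definition components :: "'a set \<Rightarrow> 'a set set \<Rightarrow> 'a set set" where
  "components W F = W // (({(u, v). {u, v} \<in> F})\<^sup>* \<inter> (W \<times> W))"

definition nbrs :: "'a set set \<Rightarrow> 'a \<Rightarrow> 'a set" where
  "nbrs F x = {y. {x, y} \<in> F}"

definition independent :: "'a set set \<Rightarrow> 'a set \<Rightarrow> bool" where
  "independent E S \<longleftrightarrow> (\<forall>e\<in>E. \<not> e \<subseteq> S)"

end

theory Submission
  imports Defs
begin


lemma sg_edge:
  assumes "simple_graph V E" "e \<in> E"
  obtains a b where "a \<noteq> b" "e = {a,b}" "a \<in> V" "b \<in> V"
  using assms unfolding simple_graph_def by blast

lemma sg_finite: assumes "simple_graph V E" shows "finite V" "finite E"
proof -
  show "finite V" using assms unfolding simple_graph_def by blast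
  have "E \<subseteq> Pow V"
  proof
    fix e assume "e \<in> E"
    then obtain a b where "e = {a,b}" "a \<in> V" "b \<in> V" using sg_edge[OF assms] by blast
    then show "e \<in> Pow V" by simp
  qed
  then show "finite E" using \<open>finite V\<close> finite_subset by blast
qed

lemma sg_two:
  assumes "simple_graph V E" "e \<in> E" "u \<in> e" "v \<in> e" "u \<noteq> v"
  shows "e = {u,v}"
proof -
  obtain a b where "a \<noteq> b" "e = {a,b}" using sg_edge[OF assms(1,2)] by blast
  then show ?thesis using assms(3-5) by auto
qed

lemma sg_not_single:
  assumes "simple_graph V E" shows "{u} \<notin> E"
proof
  assume "{u} \<in> E"
  then obtain a b where "a \<noteq> b" "{u} = {a,b}" using sg_edge[OF assms] by blast
  then show False by (metis insertI1 insert_commute singletonD)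
qed

lemma walk_cycle:
  assumes fin: "finite C" and y0: "y0 \<in> C"
    and sC: "\<forall>y\<in>C. s y \<in> C \<and> s y \<noteq> y \<and> {y, s y} \<in> F"
    and sinj: "\<forall>y\<in>C. \<forall>z\<in>C. {y, s y} = {z, s z} \<longrightarrow> y = z"
  shows "\<exists>cs. is_cycle F cs"
proof -
  define a where "a n = (s ^^ n) y0" for n
  have aS: "a (Suc n) = s (a n)" for n unfolding a_def by simp
  have aC: "a n \<in> C" for n by (induction n) (auto simp: a_def y0 sC)
  have "\<not> inj_on a {..card C}"
  proof
    assume "inj_on a {..card C}"
    then have "card (a ` {..card C}) = card C + 1" by (simp add: card_image)
    moreover have "a ` {..card C} \<subseteq> C" using aC by blast
    then have "card (a ` {..card C}) \<le> card C" by (rule card_mono[OF fin])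
    ultimately show False by simp
  qed
  then obtain i j where ij: "i \<noteq> j" "a i = a j" unfolding inj_on_def by blast
  have ex: "\<exists>j. \<exists>i<j. a i = a j"
  proof (cases "i < j")
    case True then show ?thesis using ij by blast
  next
    case False then have "j < i" using ij by simp
    then show ?thesis using ij by (intro exI[of _ i] exI[of _ j]) auto
  qed
  define J where "J = (LEAST j. \<exists>i<j. a i = a j)"
  have "\<exists>i<J. a i = a J" unfolding J_def by (rule LeastI_ex[OF ex])
  then obtain I where IJ: "I < J" "a I = a J" by blast
  have mn: "a t1 \<noteq> a t2" if "t1 < t2" "t2 < J" for t1 t2
  proof
    assume "a t1 = a t2"
    then have "\<exists>i<t2. a i = a t2" using that by blast
    then have "J \<le> t2" unfolding J_def by (rule Least_le)
    then show False using that by simp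
  qed
  define L where "L = J - I"
  define cs where "cs = map a [I..<J]"
  have lcs: "length cs = L" by (simp add: cs_def L_def)
  have nth: "cs ! t = a (I + t)" if "t < L" for t
    using that by (simp add: cs_def L_def)
  have L1: "L \<noteq> 1"
  proof
    assume "L = 1" then have "J = Suc I" using IJ by (simp add: L_def)
    then have "s (a I) = a I" using IJ aS by simp
    then show False using sC aC by blast
  qed
  have L2: "L \<noteq> 2"
  proof
    assume "L = 2" then have J: "J = Suc (Suc I)" using IJ by (simp add: L_def)
    let ?y = "a I" let ?z = "a (Suc I)"
    have z: "?z = s ?y" by (simp add: aS)
    have "s ?z = ?y" using IJ J aS by simp
    then have "{?y, s ?y} = {?z, s ?z}" using z by auto
    then have "?y = ?z" using sinj aC by blast
    moreover have "s ?y \<noteq> ?y" using sC aC by blast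
    ultimately show False using z by simp
  qed
  have L3: "L \<ge> 3" using L1 L2 IJ by (simp add: L_def)
  have dist: "distinct cs"
    unfolding cs_def distinct_map
  proof
    show "inj_on a (set [I..<J])"
    proof (rule inj_onI)
      fix x y assume "x \<in> set [I..<J]" "y \<in> set [I..<J]" "a x = a y"
      then show "x = y" using mn[of x y] mn[of y x] by (cases x y rule: linorder_cases) auto
    qed
  qed simp
  have edges: "{cs ! t, cs ! ((t + 1) mod L)} \<in> F" if "t < L" for t
  proof -
    have "cs ! ((t + 1) mod L) = a (I + t + 1)"
    proof (cases "t + 1 < L")
      case True then show ?thesis using nth by simp
    next
      case False then have "t + 1 = L" using that by simp
      then have "(t+1) mod L = 0" by simp
      moreover have "I + t + 1 = J" using \<open>t + 1 = L\<close> IJ by (simp add: L_def)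
      ultimately show ?thesis using nth[of 0] L3 IJ by simp
    qed
    then show ?thesis using nth[OF that] aS sC aC by simp
  qed
  have "is_cycle F cs" unfolding is_cycle_def using lcs L3 dist edges by simp
  then show ?thesis by blast
qed



definition adjR :: "'a set set \<Rightarrow> ('a \<times> 'a) set" where
  "adjR F = {(u,v). {u,v} \<in> F}"

lemma comps_def': "components W F = W // ((adjR F)\<^sup>* \<inter> W \<times> W)"
  by (simp add: components_def adjR_def)

lemma adj_sym: "(x,y) \<in> (adjR F)\<^sup>* \<Longrightarrow> (y,x) \<in> (adjR F)\<^sup>*"
proof (induction rule: rtrancl_induct)
  case base then show ?case by simp
next
  case (step y z)
  have "(z,y) \<in> adjR F" using step(2) by (simp add: adjR_def insert_commute)
  then show ?case using step(3) by (rule converse_rtrancl_into_rtrancl)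
qed

lemma equiv_comp: "equiv W ((adjR F)\<^sup>* \<inter> W \<times> W)"
proof (rule equivI)
  show "refl_on W ((adjR F)\<^sup>* \<inter> W \<times> W)" by (rule refl_onI) auto
  show "sym ((adjR F)\<^sup>* \<inter> W \<times> W)" by (rule symI) (auto intro: adj_sym)
  show "trans ((adjR F)\<^sup>* \<inter> W \<times> W)" by (rule transI) auto
qed auto

lemma comp_class:
  assumes "C \<in> components W F"
  obtains w where "w \<in> W" "C = {y \<in> W. (w,y) \<in> (adjR F)\<^sup>*}"
proof -
  from assms obtain w where "w \<in> W" "C = ((adjR F)\<^sup>* \<inter> W \<times> W)``{w}"
    unfolding comps_def' by (auto elim: quotientE)
  then show ?thesis using that by auto
qed

lemma comp_sub: assumes "C \<in> components W F" shows "C \<subseteq> W"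
proof -
  obtain w where "C = {y \<in> W. (w,y) \<in> (adjR F)\<^sup>*}" using comp_class[OF assms] by blast
  then show ?thesis by blast
qed

lemma comp_closed:
  assumes "C \<in> components W F" "y \<in> C" "{y,z} \<in> F" "\<forall>e\<in>F. e \<subseteq> W"
  shows "z \<in> C"
proof -
  obtain w where w: "w \<in> W" "C = {y \<in> W. (w,y) \<in> (adjR F)\<^sup>*}" using comp_class[OF assms(1)] by blast
  have "(y,z) \<in> adjR F" using assms(3) by (simp add: adjR_def)
  then have "(w,z) \<in> (adjR F)\<^sup>*" using w assms(2) by auto
  moreover have "z \<in> W" using assms(3,4) by blast
  ultimately show ?thesis using w by blast
qed

lemma comp_same:
  assumes "C1 \<in> components W F" "C2 \<in> components W F" "a \<in> C1" "b \<in> C2" "{a,b} \<in> F"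
  shows "C1 = C2"
proof (rule quotient_eqI[OF equiv_comp])
  show "C1 \<in> W // ((adjR F)\<^sup>* \<inter> W \<times> W)" using assms(1) by (simp add: comps_def')
  show "C2 \<in> W // ((adjR F)\<^sup>* \<inter> W \<times> W)" using assms(2) by (simp add: comps_def')
  show "a \<in> C1" "b \<in> C2" by fact+
  have "a \<in> W" "b \<in> W" using assms comp_sub by blast+
  moreover have "(a,b) \<in> adjR F" using assms(5) by (simp add: adjR_def)
  ultimately show "(a,b) \<in> (adjR F)\<^sup>* \<inter> W \<times> W" by auto
qed

lemma no_free_vertex:
  assumes sg: "simple_graph V E" and sub: "subgraph W F V E" and fo: "forest F"
    and ori: "\<forall>e\<in>E. h e \<in> e" and C: "C \<in> components W F"
  shows "\<exists>x\<in>C. \<forall>e\<in>F. h e \<noteq> x"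
proof (rule ccontr)
  assume "\<not> ?thesis"
  then have all: "\<forall>y\<in>C. \<exists>e\<in>F. h e = y" by blast
  have FE: "F \<subseteq> E" and FW: "\<forall>e\<in>F. e \<subseteq> W" and WV: "W \<subseteq> V"
    using sub by (auto simp: subgraph_def)
  define g where "g y = (SOME e. e \<in> F \<and> h e = y)" for y
  have g: "g y \<in> F \<and> h (g y) = y" if yC: "y \<in> C" for y
  proof -
    have "\<exists>e. e \<in> F \<and> h e = y" using all yC by blast
    then show ?thesis unfolding g_def by (rule someI_ex)
  qed
  define s where "s y = (SOME z. z \<in> g y \<and> z \<noteq> y)" for y
  have s: "s y \<in> g y \<and> s y \<noteq> y \<and> g y = {y, s y}" if "y \<in> C" for y
  proof -
    have ge: "g y \<in> E" using g[OF that] FE by blast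
    then obtain a b where ab: "a \<noteq> b" "g y = {a,b}" using sg_edge[OF sg] by blast
    have "h (g y) \<in> g y" using ori ge by blast
    then have yg: "y \<in> g y" using g[OF that] by simp
    have "\<exists>z. z \<in> g y \<and> z \<noteq> y" using ab yg by blast
    then have s1: "s y \<in> g y \<and> s y \<noteq> y" unfolding s_def by (rule someI_ex)
    then have "g y = {y, s y}" by (intro sg_two[OF sg ge yg]) auto
    with s1 show ?thesis by blast
  qed
  have sC: "\<forall>y\<in>C. s y \<in> C \<and> s y \<noteq> y \<and> {y, s y} \<in> F"
  proof
    fix y assume y: "y \<in> C"
    have e1: "g y = {y, s y}" and gF: "g y \<in> F" using s[OF y] g[OF y] by blast+
    have "{y, s y} \<in> F" using gF unfolding e1 .
    moreover then have "s y \<in> C" by (rule comp_closed[OF C y _ FW])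
    ultimately show "s y \<in> C \<and> s y \<noteq> y \<and> {y, s y} \<in> F" using s[OF y] by blast
  qed
  have sinj: "\<forall>y\<in>C. \<forall>z\<in>C. {y, s y} = {z, s z} \<longrightarrow> y = z"
  proof (intro ballI impI)
    fix y z assume yz: "y \<in> C" "z \<in> C" "{y, s y} = {z, s z}"
    moreover have "g y = {y, s y}" "g z = {z, s z}" using s[OF yz(1)] s[OF yz(2)] by blast+
    ultimately have "g y = g z" by (metis (no_types))
    then have "h (g y) = h (g z)" by simp
    then show "y = z" using g[OF yz(1)] g[OF yz(2)] by simp
  qed
  obtain w where w: "w \<in> W" "C = {y \<in> W. (w,y) \<in> (adjR F)\<^sup>*}" using comp_class[OF C] by blast
  have wC: "w \<in> C" using w by simp
  have "C \<subseteq> V" using comp_sub[OF C] WV by blast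
  then have finC: "finite C" by (rule finite_subset[OF _ sg_finite(1)[OF sg]])
  from walk_cycle[OF finC wC sC sinj] fo show False by (simp add: forest_def)
qed



lemma single_filter: "{e' \<in> {e}. P e'} = (if P e then {e} else {})" by auto
lemma single_filter2: "{e'. e' = e \<and> P e'} = (if P e then {e} else {})" by auto

lemma card_filter_sum:
  assumes "finite X"
  shows "real (card {e\<in>X. P e}) = (\<Sum>e\<in>X. real (card {e'\<in>{e}. P e'}))"
proof -
  have "real (card {e\<in>X. P e}) = (\<Sum>e\<in>{e\<in>X. P e}. 1)" by simp
  also have "\<dots> = (\<Sum>e\<in>X. if P e then 1 else 0)" using assms by (rule sum.inter_filter)
  also have "\<dots> = (\<Sum>e\<in>X. real (card {e'\<in>{e}. P e'}))"
    by (rule sum.cong) (auto simp: single_filter single_filter2)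
  finally show ?thesis .
qed

lemma dir1:
  assumes sg: "simple_graph V E" and so: "strongly_EFX_orientable_01 V E"
    and sub: "subgraph W F V E" and fo: "forest F"
  shows "\<exists>x. (\<forall>C\<in>components W F. x C \<in> C) \<and>
            independent E (\<Union>C\<in>components W F. nbrs F (x C))"
proof -
  have FE: "F \<subseteq> E" and FW: "\<forall>e\<in>F. e \<subseteq> W" and WV: "W \<subseteq> V"
    using sub by (auto simp: subgraph_def)
  have finE: "finite E" by (rule sg_finite(2)[OF sg])
  define f where "f v X = real (card {e\<in>X. e \<in> F \<and> v \<in> e})" for v and X :: "'a set set"
  have inst: "additive_01_instance V E f"
    unfolding additive_01_instance_def graphical_instance_def
  proof (intro conjI ballI allI impI)
    fix v X Y assume "X \<subseteq> E" "Y \<subseteq> E" "X \<subseteq> Y"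
    then show "f v X \<le> f v Y" unfolding f_def
      using finE by (intro of_nat_mono card_mono) (auto intro: finite_subset)
  next
    fix v X show "0 \<le> f v X" by (simp add: f_def)
  next
    fix v X assume "X \<subseteq> E"
    then have "{e\<in>X. e \<in> F \<and> v \<in> e} = {e\<in>X \<inter> incident_edges E v. e \<in> F \<and> v \<in> e}"
      by (auto simp: incident_edges_def)
    then show "f v X = f v (X \<inter> incident_edges E v)" by (simp add: f_def)
  next
    fix v X assume "X \<subseteq> E"
    then have "finite X" using finE finite_subset by blast
    then show "f v X = (\<Sum>e\<in>X. f v {e})" unfolding f_def by (rule card_filter_sum)
  next
    fix v e show "f v {e} \<in> {0,1}" by (auto simp: f_def single_filter single_filter2)
  qed
  obtain h where efx: "EFX_orientation V E f h" using so inst unfolding strongly_EFX_orientable_01_def by blast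
  have ori: "\<forall>e\<in>E. h e \<in> e" using efx by (simp add: EFX_orientation_def orientation_def)
  have efx2: "\<And>u v g. u \<in> V \<Longrightarrow> v \<in> V \<Longrightarrow> g \<in> bundle_of E h v \<Longrightarrow>
      f u (bundle_of E h u) \<ge> f u (bundle_of E h v - {g})"
    using efx by (simp add: EFX_orientation_def)
  define x where "x C = (SOME x. x \<in> C \<and> (\<forall>e\<in>F. h e \<noteq> x))" for C
  have xC: "x C \<in> C \<and> (\<forall>e\<in>F. h e \<noteq> x C)" if C: "C \<in> components W F" for C
  proof -
    have "\<exists>x. x \<in> C \<and> (\<forall>e\<in>F. h e \<noteq> x)" using no_free_vertex[OF sg sub fo ori C] by blast
    then show ?thesis unfolding x_def by (rule someI_ex)
  qed
  have bund: "bundle_of E h y = {{x C, y}}" if C: "C \<in> components W F" and yF: "{x C, y} \<in> F" for C y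
  proof -
    let ?u = "x C" let ?e0 = "{x C, y}"
    have e0E: "?e0 \<in> E" using yF FE by blast
    have "h ?e0 \<in> ?e0" using ori e0E by blast
    moreover have "h ?e0 \<noteq> ?u" using xC[OF C] yF by blast
    ultimately have he0: "h ?e0 = y" by blast
    then have e0b: "?e0 \<in> bundle_of E h y" using e0E by (simp add: bundle_of_def)
    have uV: "?u \<in> V" using xC[OF C] comp_sub[OF C] WV by blast
    have yV: "y \<in> V" using yF FW WV by blast
    have "g = ?e0" if gb: "g \<in> bundle_of E h y" for g
    proof (rule ccontr)
      assume gne: "g \<noteq> ?e0"
      have le: "f ?u (bundle_of E h ?u) \<ge> f ?u (bundle_of E h y - {g})" by (rule efx2[OF uV yV gb])
      have emp: "{e \<in> bundle_of E h ?u. e \<in> F \<and> ?u \<in> e} = {}"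
        using xC[OF C] by (auto simp: bundle_of_def)
      have z: "f ?u (bundle_of E h ?u) = 0" unfolding f_def emp by simp
      have fin: "finite {e \<in> bundle_of E h y - {g}. e \<in> F \<and> ?u \<in> e}"
        using finE by (auto simp: bundle_of_def)
      have "?e0 \<in> {e \<in> bundle_of E h y - {g}. e \<in> F \<and> ?u \<in> e}" using e0b gne yF by auto
      then have "card {e \<in> bundle_of E h y - {g}. e \<in> F \<and> ?u \<in> e} \<noteq> 0" using fin by auto
      then have "f ?u (bundle_of E h y - {g}) > 0" by (simp add: f_def)
      then show False using le z by simp
    qed
    then show ?thesis using e0b by blast
  qed
  have key: False if ab: "a \<noteq> b" "{a,b} \<in> E" "h {a,b} = a"
    and C1: "C1 \<in> components W F" "a \<in> nbrs F (x C1)"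
    and C2: "C2 \<in> components W F" "b \<in> nbrs F (x C2)" for a b C1 C2
  proof -
    have "{x C1, a} \<in> F" using C1 by (simp add: nbrs_def)
    then have "bundle_of E h a = {{x C1, a}}" by (rule bund[OF C1(1)])
    moreover have "{a,b} \<in> bundle_of E h a" using ab by (simp add: bundle_of_def)
    ultimately have "{a,b} = {x C1, a}" by blast
    then have bx: "b = x C1" using ab(1) by (auto simp: doubleton_eq_iff)
    have F21: "{x C2, x C1} \<in> F" using C2 bx by (simp add: nbrs_def)
    have "C2 = C1" by (rule comp_same[OF C2(1) C1(1) _ _ F21]) (use xC C1 C2 in blast)+
    then have "{x C1} \<in> E" using F21 FE by auto
    then show False using sg_not_single[OF sg] by blast
  qed
  have indep: "independent E (\<Union>C\<in>components W F. nbrs F (x C))"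
    unfolding independent_def
  proof (intro ballI notI)
    fix e assume eE: "e \<in> E" and sub2: "e \<subseteq> (\<Union>C\<in>components W F. nbrs F (x C))"
    obtain a b where ab: "a \<noteq> b" "e = {a,b}" using sg_edge[OF sg eE] by blast
    obtain C1 where C1: "C1 \<in> components W F" "a \<in> nbrs F (x C1)" using sub2 ab by blast
    obtain C2 where C2: "C2 \<in> components W F" "b \<in> nbrs F (x C2)" using sub2 ab by blast
    have "h e \<in> e" using ori eE by blast
    then have "h {a,b} = a \<or> h {b,a} = b" using ab by (auto simp: insert_commute)
    then show False
    proof
      assume "h {a,b} = a" then show False using key[OF ab(1) _ _ C1 C2] eE ab by blast
    next
      assume "h {b,a} = b"
      moreover have "{b,a} \<in> E" using eE ab by (simp add: insert_commute)
      ultimately show False using key[OF ab(1)[symmetric] _ _ C2 C1] by blast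
    qed
  qed
  show ?thesis using xC indep by blast
qed



lemma avoid_relpow:
  assumes "(x,y) \<in> R ^^ n" "x \<noteq> a" "\<And>z. (z,a) \<notin> R"
    "\<And>s t. (s,t) \<in> R \<Longrightarrow> s \<noteq> a \<Longrightarrow> (s,t) \<in> R'"
  shows "(x,y) \<in> R' ^^ n \<and> y \<noteq> a"
  using assms(1)
proof (induction n arbitrary: y)
  case 0 then show ?case using assms(2) by simp
next
  case (Suc n)
  from Suc.prems obtain z where z: "(x,z) \<in> R ^^ n" "(z,y) \<in> R" by (rule relpow_Suc_E)
  from Suc.IH[OF z(1)] have "(x,z) \<in> R' ^^ n" "z \<noteq> a" by auto
  moreover have "(z,y) \<in> R'" using assms(4)[OF z(2) \<open>z \<noteq> a\<close>] .
  moreover have "y \<noteq> a" using z(2) assms(3) by blast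
  ultimately show ?case by auto
qed

lemma avoid_rtrancl:
  assumes "(x,y) \<in> R\<^sup>*" "x \<noteq> a" "\<And>z. (z,a) \<notin> R"
    "\<And>s t. (s,t) \<in> R \<Longrightarrow> s \<noteq> a \<Longrightarrow> (s,t) \<in> R'"
  shows "(x,y) \<in> R'\<^sup>*"
proof -
  obtain n where "(x,y) \<in> R ^^ n" using assms(1) rtrancl_power by blast
  then have "(x,y) \<in> R' ^^ n" using avoid_relpow[OF _ assms(2,3,4)] by blast
  then show ?thesis using rtrancl_power by blast
qed

lemma predclosed:
  assumes "(u,c) \<in> R\<^sup>*" "c \<in> S" "\<And>s y. s \<in> S \<Longrightarrow> (y,s) \<in> R \<Longrightarrow> y \<in> S"
  shows "u \<in> S"
  using assms(1,2)
proof (induction rule: rtrancl_induct)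
  case base then show ?case .
next
  case (step y z)
  then show ?case using assms(3) by blast
qed

locale ctx =
  fixes V :: "'a set" and E :: "'a set set" and f :: "'a \<Rightarrow> 'a set set \<Rightarrow> real"
  assumes sg: "simple_graph V E" and inst: "additive_01_instance V E f"
begin

definition val :: "'a \<Rightarrow> 'a set \<Rightarrow> bool" where
  "val z e \<longleftrightarrow> e \<in> E \<and> z \<in> e \<and> f z {e} = 1"

definition valid :: "('a \<Rightarrow> 'a set option) \<Rightarrow> bool" where
  "valid q \<longleftrightarrow> (\<forall>z e. q z = Some e \<longrightarrow> val z e) \<and>
     (\<forall>a b e. q a = Some e \<longrightarrow> q b = Some e \<longrightarrow> a = b)"

definition maxdom :: "('a \<Rightarrow> 'a set option) \<Rightarrow> bool" where
  "maxdom q \<longleftrightarrow> valid q \<and> (\<forall>q'. valid q' \<longrightarrow> card (dom q') \<le> card (dom q))"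

definition arrow :: "('a \<Rightarrow> 'a set option) \<Rightarrow> ('a \<times> 'a) set" where
  "arrow q = {(a,b). q b = Some {a,b} \<and> val a {a,b}}"

definition D :: "('a \<Rightarrow> 'a set option) \<Rightarrow> 'a \<Rightarrow> 'a set" where
  "D q h = {y. (h,y) \<in> (arrow q)\<^sup>*}"

lemma finV: "finite V" using sg_finite[OF sg] by blast
lemma finE: "finite E" using sg_finite[OF sg] by blast

lemma val_V: "val z e \<Longrightarrow> z \<in> V"
  unfolding val_def using sg_edge[OF sg] by blast

lemma valid_dom: "valid q \<Longrightarrow> dom q \<subseteq> V"
  unfolding valid_def dom_def using val_V by blast

lemma valid_fin: "valid q \<Longrightarrow> finite (dom q)"
  using valid_dom finV finite_subset by blast

lemma valid_inj: "valid q \<Longrightarrow> q a = Some e \<Longrightarrow> q b = Some e \<Longrightarrow> a = b"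
  unfolding valid_def by blast

lemma valid_val: "valid q \<Longrightarrow> q a = Some e \<Longrightarrow> val a e"
  unfolding valid_def by blast

lemma maxdom_ex: "\<exists>q. maxdom q"
proof -
  have v0: "valid (\<lambda>_. None)" by (simp add: valid_def)
  have "\<forall>q. valid q \<longrightarrow> card (dom q) < card V + 1"
  proof (intro allI impI)
    fix q assume "valid q"
    then have "card (dom q) \<le> card V" using valid_dom finV card_mono by blast
    then show "card (dom q) < card V + 1" by simp
  qed
  from Lattices_Big.ex_has_greatest_nat[of valid, OF v0 this]
  show ?thesis unfolding maxdom_def by blast
qed

lemma not_single: "{u} \<notin> E" using sg_not_single[OF sg] .

lemma arrow_ne: "(a,b) \<in> arrow q \<Longrightarrow> a \<noteq> b"
  unfolding arrow_def val_def using not_single by auto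

lemma nopred: "q h = None \<Longrightarrow> (a,h) \<notin> arrow q"
  unfolding arrow_def by simp

lemma maxdom_hole:
  assumes m: "maxdom q" and r: "q r = None" and v: "val r e"
  shows "\<exists>y. y \<noteq> r \<and> e = {r,y} \<and> q y = Some e \<and> (r,y) \<in> arrow q"
proof -
  have vq: "valid q" using m by (simp add: maxdom_def)
  have "\<exists>w. q w = Some e"
  proof (rule ccontr)
    assume ne: "\<not> (\<exists>w. q w = Some e)"
    let ?q = "q(r := Some e)"
    have "valid ?q" using vq v ne r unfolding valid_def by auto
    then have "card (dom ?q) \<le> card (dom q)" using m unfolding maxdom_def by blast
    moreover have "dom ?q = insert r (dom q)" by auto
    moreover have "r \<notin> dom q" using r by auto
    ultimately show False using valid_fin[OF vq] by (simp add: card_insert_disjoint)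
  qed
  then obtain w where w: "q w = Some e" by blast
  have wr: "w \<noteq> r" using w r by auto
  have "val w e" using valid_val[OF vq w] .
  then have "w \<in> e" "e \<in> E" by (auto simp: val_def)
  moreover have "r \<in> e" using v by (simp add: val_def)
  ultimately have "e = {r, w}" using sg_two[OF sg] wr by blast
  moreover then have "(r,w) \<in> arrow q" using w v by (simp add: arrow_def)
  ultimately show ?thesis using wr w by blast
qed

lemma hole_unique:
  assumes "q h = None" "q z = None" "z \<in> D q h"
  shows "z = h"
proof -
  have "(h,z) \<in> (arrow q)\<^sup>*" using assms(3) by (simp add: D_def)
  then show ?thesis
  proof (cases rule: rtranclE)
    case (step c) then show ?thesis using nopred[of q z, OF assms(2)] by blast
  qed simp
qed

section \<open>Moving a hole one step\<close>

definition mv :: "('a \<Rightarrow> 'a set option) \<Rightarrow> 'a \<Rightarrow> 'a \<Rightarrow> ('a \<Rightarrow> 'a set option)" where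
  "mv q h v = q(h := Some {h,v}, v := None)"

context
  fixes q h v
  assumes m: "maxdom q" and hn: "q h = None" and hv: "(h,v) \<in> arrow q"
begin

lemma mv_vq: "valid q" using m by (simp add: maxdom_def)

lemma mv_qv: "q v = Some {h,v}" and mv_valh: "val h {h,v}"
  using hv by (auto simp: arrow_def)

lemma mv_ne: "h \<noteq> v" using arrow_ne[OF hv] .

lemma mv_valv: "val v {h,v}" using valid_val[OF mv_vq mv_qv] .

lemma mv_h: "mv q h v h = Some {h,v}" using mv_ne by (simp add: mv_def)
lemma mv_v: "mv q h v v = None" by (simp add: mv_def)
lemma mv_other: "z \<noteq> h \<Longrightarrow> z \<noteq> v \<Longrightarrow> mv q h v z = q z" by (simp add: mv_def)

lemma mv_valid: "valid (mv q h v)"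
  unfolding valid_def
proof (intro conjI allI impI)
  fix z e assume "mv q h v z = Some e"
  then show "val z e" using mv_valh valid_val[OF mv_vq] by (auto simp: mv_def split: if_splits)
next
  fix a b e assume a: "mv q h v a = Some e" and b: "mv q h v b = Some e"
  have inj: "\<And>a b e. q a = Some e \<Longrightarrow> q b = Some e \<Longrightarrow> a = b" using valid_inj[OF mv_vq] by blast
  show "a = b"
    using a b mv_qv inj[of _ "{h,v}"] inj[of a e b] mv_ne
    by (auto simp: mv_def split: if_splits)
qed

lemma mv_dom: "dom (mv q h v) = insert h (dom q - {v})"
  using mv_ne by (auto simp: mv_def)

lemma mv_maxdom: "maxdom (mv q h v)"
proof -
  have "card (dom (mv q h v)) = card (dom q)"
  proof -
    have f: "finite (dom q)" using valid_fin[OF mv_vq] .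
    have "v \<in> dom q" using mv_qv by auto
    moreover have "h \<notin> dom q - {v}" using hn by auto
    ultimately have "card (insert h (dom q - {v})) = Suc (card (dom q - {v}))"
      using f by (intro card_insert_disjoint) auto
    also have "\<dots> = card (dom q)" using card_Suc_Diff1[OF f \<open>v \<in> dom q\<close>] .
    finally show ?thesis unfolding mv_dom .
  qed
  then show ?thesis using m mv_valid by (simp add: maxdom_def)
qed

lemma mv_ran: "ran (mv q h v) = ran q"
proof
  show "ran (mv q h v) \<subseteq> ran q"
    using mv_qv by (auto simp: ran_def mv_def split: if_splits)
  show "ran q \<subseteq> ran (mv q h v)"
  proof
    fix e assume "e \<in> ran q"
    then obtain z where z: "q z = Some e" by (auto simp: ran_def)
    show "e \<in> ran (mv q h v)"
    proof (cases "z = v")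
      case True then have "mv q h v h = Some e" using z mv_qv mv_h by simp
      then show ?thesis by (auto simp: ran_def)
    next
      case False
      moreover have "z \<noteq> h" using z hn by auto
      ultimately have "mv q h v z = Some e" using z by (simp add: mv_other)
      then show ?thesis by (auto simp: ran_def)
    qed
  qed
qed

lemma arrow_fwd: "(a,b) \<in> arrow q \<Longrightarrow> a \<noteq> h \<Longrightarrow> (a,b) \<in> arrow (mv q h v)"
proof -
  assume ab: "(a,b) \<in> arrow q" "a \<noteq> h"
  have bh: "b \<noteq> h" using ab nopred[of q h, OF hn] by blast
  have bv: "b \<noteq> v"
  proof
    assume "b = v"
    then have "{a,v} = {h,v}" using ab mv_qv by (simp add: arrow_def)
    then show False using ab(2) arrow_ne[OF ab(1)] \<open>b = v\<close> by (auto simp: doubleton_eq_iff)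
  qed
  show ?thesis using ab bh bv by (simp add: arrow_def mv_other)
qed

lemma arrow_bwd: "(a,b) \<in> arrow (mv q h v) \<Longrightarrow> a \<noteq> v \<Longrightarrow> (a,b) \<in> arrow q"
proof -
  assume ab: "(a,b) \<in> arrow (mv q h v)" "a \<noteq> v"
  have bv: "b \<noteq> v" using ab mv_v by (auto simp: arrow_def)
  show ?thesis
  proof (cases "b = h")
    case True
    then have "{a,h} = {h,v}" using ab mv_h by (simp add: arrow_def)
    then show ?thesis using ab(2) arrow_ne[OF ab(1)] True by (auto simp: doubleton_eq_iff)
  next
    case False
    then show ?thesis using ab bv by (simp add: arrow_def mv_other)
  qed
qed

lemma arrow_vh: "(v,h) \<in> arrow (mv q h v)"
  using mv_h mv_valv by (simp add: arrow_def insert_commute)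

lemma nopred_v: "(a,v) \<notin> arrow (mv q h v)"
  using nopred[of "mv q h v" v, OF mv_v] .

lemma D_other:
  assumes "h' \<noteq> h" "h' \<noteq> v"
  shows "D (mv q h v) h' = D q h'"
proof
  show "D q h' \<subseteq> D (mv q h v) h'"
    unfolding D_def using avoid_rtrancl[OF _ assms(1) nopred[of q h, OF hn] arrow_fwd] by blast
  show "D (mv q h v) h' \<subseteq> D q h'"
    unfolding D_def using avoid_rtrancl[OF _ assms(2) nopred_v arrow_bwd] by blast
qed

lemma arrow_bwd2: "(a,b) \<in> arrow (mv q h v) \<Longrightarrow> b \<noteq> h \<Longrightarrow> (a,b) \<in> arrow q"
proof -
  assume ab: "(a,b) \<in> arrow (mv q h v)" "b \<noteq> h"
  have bv: "b \<noteq> v" using ab mv_v by (auto simp: arrow_def)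
  then show ?thesis using ab by (simp add: arrow_def mv_other)
qed

lemma D_moved: "D (mv q h v) v = D q h"
proof
  show "D (mv q h v) v \<subseteq> D q h"
  proof
    fix y assume "y \<in> D (mv q h v) v"
    then have "(v,y) \<in> (arrow (mv q h v))\<^sup>*" by (simp add: D_def)
    then show "y \<in> D q h"
    proof (induction rule: rtrancl_induct)
      case base then show ?case using hv by (simp add: D_def)
    next
      case (step y z)
      show ?case
      proof (cases "z = h")
        case True then show ?thesis by (simp add: D_def)
      next
        case False
        then have "(y,z) \<in> arrow q" using arrow_bwd2[OF step(2)] by blast
        then show ?thesis using step(3) by (simp add: D_def)
      qed
    qed
  qed
  show "D q h \<subseteq> D (mv q h v) v"
  proof
    fix y assume "y \<in> D q h"
    then have "(h,y) \<in> (arrow q)\<^sup>*" by (simp add: D_def)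
    then show "y \<in> D (mv q h v) v"
    proof (cases rule: converse_rtranclE)
      case base then show ?thesis using arrow_vh by (simp add: D_def)
    next
      case (step c)
      have ch: "c \<noteq> h" using arrow_ne[OF step(1)] by simp
      have cy: "(c,y) \<in> (arrow (mv q h v))\<^sup>*"
        using avoid_rtrancl[OF step(2) ch nopred[of q h, OF hn] arrow_fwd] by blast
      show ?thesis
      proof (cases "c = v")
        case True then show ?thesis using cy by (simp add: D_def)
      next
        case False
        have "(h,c) \<in> arrow (mv q h v)" using step(1) ch False by (simp add: arrow_def mv_other)
        then have "(v,c) \<in> (arrow (mv q h v))\<^sup>*" using arrow_vh by auto
        then show ?thesis using cy by (simp add: D_def)
      qed
    qed
  qed
qed

end

end



context ctx begin

definition Inv :: "'a set set \<Rightarrow> 'a set set \<Rightarrow> ('a \<Rightarrow> 'a set option) \<Rightarrow> bool" where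
  "Inv Cs R0 q \<longleftrightarrow> maxdom q \<and> ran q = R0 \<and> (\<forall>C\<in>Cs. \<exists>h\<in>C. q h = None \<and> C = D q h)
     \<and> (\<forall>z\<in>V. q z = None \<longrightarrow> z \<in> \<Union>Cs)"

lemma move_hole:
  assumes disj: "\<forall>C1\<in>Cs. \<forall>C2\<in>Cs. C1 \<noteq> C2 \<longrightarrow> C1 \<inter> C2 = {}"
  shows "Inv Cs R0 q \<Longrightarrow> C \<in> Cs \<Longrightarrow> h \<in> C \<Longrightarrow> q h = None \<Longrightarrow> C = D q h
    \<Longrightarrow> (h,r) \<in> (arrow q) ^^ n
    \<Longrightarrow> \<exists>q'. Inv Cs R0 q' \<and> q' r = None \<and> (\<forall>z. z \<notin> C \<longrightarrow> q' z = q z)"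
proof (induction n arbitrary: q h)
  case 0 then show ?case by auto
next
  case (Suc n)
  note I = Suc.prems(1)
  have m: "maxdom q" using I by (simp add: Inv_def)
  obtain v where hv: "(h,v) \<in> arrow q" and vr: "(v,r) \<in> (arrow q) ^^ n"
    using relpow_Suc_D2[OF Suc.prems(6)] by blast
  note hn = Suc.prems(4)
  define q1 where "q1 = mv q h v"
  have vC: "v \<in> C" using hv Suc.prems(5) by (auto simp: D_def)
  have q1v: "q1 v = None" unfolding q1_def by (rule mv_v[OF m hn hv])
  have Dv: "C = D q1 v" unfolding q1_def using D_moved[OF m hn hv] Suc.prems(5) by simp
  have hvne: "h \<noteq> v" by (rule mv_ne[OF m hn hv])
  have I1: "Inv Cs R0 q1"
    unfolding Inv_def
  proof (intro conjI ballI impI)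
    show "maxdom q1" unfolding q1_def by (rule mv_maxdom[OF m hn hv])
    show "ran q1 = R0" unfolding q1_def using mv_ran[OF m hn hv] I by (simp add: Inv_def)
  next
    fix C' assume C': "C' \<in> Cs"
    show "\<exists>h'\<in>C'. q1 h' = None \<and> C' = D q1 h'"
    proof (cases "C' = C")
      case True then show ?thesis using vC q1v Dv by blast
    next
      case False
      obtain h' where h': "h' \<in> C'" "q h' = None" "C' = D q h'" using I C' by (auto simp: Inv_def)
      have "h' \<notin> C" using disj C' Suc.prems(2) False h'(1) by blast
      then have "h' \<noteq> h" "h' \<noteq> v" using Suc.prems(3) vC by auto
      then have "q1 h' = None" "D q1 h' = D q h'"
        using h'(2) mv_other[OF m hn hv] D_other[OF m hn hv] unfolding q1_def by auto
      then show ?thesis using h' by auto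
    qed
  next
    fix z assume z: "z \<in> V" "q1 z = None"
    show "z \<in> \<Union>Cs"
    proof (cases "z = v")
      case True then show ?thesis using vC Suc.prems(2) by blast
    next
      case False
      have "z \<noteq> h" using z(2) mv_h[OF m hn hv] unfolding q1_def by auto
      then have "q z = None" using z(2) False mv_other[OF m hn hv] unfolding q1_def by auto
      then show ?thesis using I z(1) by (auto simp: Inv_def)
    qed
  qed
  have vr1: "(v,r) \<in> (arrow q1) ^^ n"
    using avoid_relpow[OF vr hvne[symmetric] nopred[of q h, OF hn] arrow_fwd[OF m hn hv]]
    unfolding q1_def by blast
  obtain q' where q': "Inv Cs R0 q'" "q' r = None" "\<forall>z. z \<notin> C \<longrightarrow> q' z = q1 z"
    using Suc.IH[OF I1 Suc.prems(2) vC q1v Dv vr1] by blast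
  have "\<forall>z. z \<notin> C \<longrightarrow> q' z = q z"
  proof (intro allI impI)
    fix z assume "z \<notin> C"
    then have "z \<noteq> h" "z \<noteq> v" using Suc.prems(3) vC by auto
    then show "q' z = q z" using q'(3) \<open>z \<notin> C\<close> mv_other[OF m hn hv] unfolding q1_def by auto
  qed
  then show ?case using q' by blast
qed

lemma roots:
  assumes disj: "\<forall>C1\<in>Cs. \<forall>C2\<in>Cs. C1 \<noteq> C2 \<longrightarrow> C1 \<inter> C2 = {}"
    and fin: "finite Cs" and xC: "\<forall>C\<in>Cs. x C \<in> C"
  shows "Inv Cs R0 q \<Longrightarrow> \<exists>q'. Inv Cs R0 q' \<and> (\<forall>C\<in>Cs. q' (x C) = None)"
proof (induction "card {C\<in>Cs. q (x C) \<noteq> None}" arbitrary: q rule: less_induct)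
  case less
  show ?case
  proof (cases "\<forall>C\<in>Cs. q (x C) = None")
    case True then show ?thesis using less.prems by blast
  next
    case False
    then obtain C where C: "C \<in> Cs" "q (x C) \<noteq> None" by blast
    obtain h where h: "h \<in> C" "q h = None" "C = D q h" using less.prems C(1) by (auto simp: Inv_def)
    have "(h, x C) \<in> (arrow q)\<^sup>*" using xC C(1) h(3) by (auto simp: D_def)
    then obtain n where "(h, x C) \<in> (arrow q) ^^ n" using rtrancl_power by blast
    from move_hole[OF disj less.prems C(1) h this] obtain q' where
      q': "Inv Cs R0 q'" "q' (x C) = None" "\<forall>z. z \<notin> C \<longrightarrow> q' z = q z" by blast
    have sub: "{C\<in>Cs. q' (x C) \<noteq> None} \<subseteq> {C\<in>Cs. q (x C) \<noteq> None} - {C}"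
    proof
      fix C' assume C': "C' \<in> {C\<in>Cs. q' (x C) \<noteq> None}"
      then have "C' \<noteq> C" using q'(2) by auto
      then have "x C' \<notin> C" using disj C' C(1) xC by blast
      then show "C' \<in> {C\<in>Cs. q (x C) \<noteq> None} - {C}" using C' q'(3) \<open>C' \<noteq> C\<close> by auto
    qed
    have "card {C\<in>Cs. q' (x C) \<noteq> None} < card {C\<in>Cs. q (x C) \<noteq> None}"
    proof -
      have f: "finite {C\<in>Cs. q (x C) \<noteq> None}" using fin by simp
      have "card {C\<in>Cs. q' (x C) \<noteq> None} \<le> card ({C\<in>Cs. q (x C) \<noteq> None} - {C})"
        using sub f by (intro card_mono) auto
      also have "\<dots> < card {C\<in>Cs. q (x C) \<noteq> None}"
        using f C by (intro card_Diff1_less) auto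
      finally show ?thesis .
    qed
    from less.hyps[OF this q'(1)] show ?thesis .
  qed
qed

end



lemma mod_cyc_arith:
  fixes i j k :: nat
  assumes "i < k" "j < k" "3 \<le> k" "i = (j+1) mod k" "j = (i+1) mod k"
  shows False
proof (cases "j + 1 < k")
  case True
  then have i: "i = j + 1" using assms(4) mod_less[OF True] by simp
  show False
  proof (cases "j + 2 < k")
    case True
    then have "(i+1) mod k = j + 2" using i mod_less[OF True] by simp
    then show False using assms(5) by simp
  next
    case False then have "j + 2 = k" using \<open>j+1<k\<close> by simp
    then have "i + 1 = k" using i by simp
    then have "(i+1) mod k = 0" by simp
    then have "j = 0" using assms(5) by simp
    then show False using \<open>j + 2 = k\<close> assms(3) by simp
  qed
next
  case False then have jk: "j + 1 = k" using assms(2) by simp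
  then have "(j+1) mod k = 0" by simp
  then have i0: "i = 0" using assms(4) by simp
  have "(1::nat) < k" using assms(3) by simp
  then have "(i+1) mod k = 1" using i0 mod_less by simp
  then have "j = 1" using assms(5) by simp
  then show False using jk assms(3) by simp
qed

lemma cyc_edge_inj:
  assumes d: "distinct cs" and k: "3 \<le> length cs" and i: "i < length cs" and j: "j < length cs"
    and eq: "{cs!i, cs!((i+1) mod length cs)} = {cs!j, cs!((j+1) mod length cs)}"
  shows "i = j"
proof -
  let ?k = "length cs"
  have k0: "0 < ?k" using k by linarith
  have i1: "(i+1) mod ?k < ?k" and j1: "(j+1) mod ?k < ?k" using mod_less_divisor[OF k0] by blast+
  have "(cs!i = cs!j \<and> cs!((i+1) mod ?k) = cs!((j+1) mod ?k)) \<or>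
        (cs!i = cs!((j+1) mod ?k) \<and> cs!((i+1) mod ?k) = cs!j)"
    using eq by (simp only: doubleton_eq_iff)
  then show ?thesis
  proof
    assume "cs!i = cs!j \<and> cs!((i+1) mod ?k) = cs!((j+1) mod ?k)"
    then show ?thesis using nth_eq_iff_index_eq[OF d i j] by blast
  next
    assume h: "cs!i = cs!((j+1) mod ?k) \<and> cs!((i+1) mod ?k) = cs!j"
    then have a: "i = (j+1) mod ?k" using nth_eq_iff_index_eq[OF d i j1] by blast
    have b: "j = (i+1) mod ?k" using h nth_eq_iff_index_eq[OF d i1 j] by metis
    from mod_cyc_arith[OF i j k a b] show ?thesis ..
  qed
qed

context ctx begin

definition UU :: "('a \<Rightarrow> 'a set option) \<Rightarrow> 'a set" where "UU p = {u\<in>V. p u = None}"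
definition WW :: "('a \<Rightarrow> 'a set option) \<Rightarrow> 'a set" where "WW p = (\<Union>u\<in>UU p. D p u)"
definition FF :: "('a \<Rightarrow> 'a set option) \<Rightarrow> 'a set set" where "FF p = {e \<in> ran p. e \<subseteq> WW p}"

context fixes p assumes pm: "maxdom p"
begin

lemma pv: "valid p" using pm by (simp add: maxdom_def)

lemma D_V: "u \<in> V \<Longrightarrow> D p u \<subseteq> V"
proof
  fix y assume u: "u \<in> V" and "y \<in> D p u"
  then have "(u,y) \<in> (arrow p)\<^sup>*" by (simp add: D_def)
  then show "y \<in> V"
  proof (cases rule: rtranclE)
    case base then show ?thesis using u by simp
  next
    case (step c)
    then have "p y = Some {c,y}" by (simp add: arrow_def)
    then show ?thesis using valid_val[OF pv] val_V by blast
  qed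
qed

lemma WW_V: "WW p \<subseteq> V" using D_V by (auto simp: WW_def UU_def)

lemma FF_E: "FF p \<subseteq> E"
  using valid_val[OF pv] by (auto simp: FF_def ran_def val_def)

lemma sub: "subgraph (WW p) (FF p) V E"
  using WW_V FF_E by (auto simp: subgraph_def FF_def)

lemma D_pred:
  assumes "y \<in> D p u" "p u = None" "p y \<noteq> None"
  obtains c where "(u,c) \<in> (arrow p)\<^sup>*" "(c,y) \<in> arrow p"
proof -
  have "(u,y) \<in> (arrow p)\<^sup>*" using assms(1) by (simp add: D_def)
  then show ?thesis
  proof (cases rule: rtranclE)
    case base then show ?thesis using assms by simp
  next
    case (step c) then show ?thesis using that by blast
  qed
qed

lemma FF_ne: "{a,b} \<in> FF p \<Longrightarrow> a \<noteq> b"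
  using FF_E not_single by force

lemma closure:
  assumes a: "a \<in> D p u" and u: "u \<in> UU p" and ab: "{a,b} \<in> FF p"
  shows "b \<in> D p u"
proof -
  have abne: "a \<noteq> b" using FF_ne[OF ab] .
  obtain z where z: "p z = Some {a,b}" using ab by (auto simp: FF_def ran_def)
  have "z \<in> {a,b}" using valid_val[OF pv z] by (simp add: val_def)
  then consider "z = a" | "z = b" by blast
  then show ?thesis
  proof cases
    case 1
    have pu: "p u = None" using u by (simp add: UU_def)
    obtain c where c: "(u,c) \<in> (arrow p)\<^sup>*" "(c,a) \<in> arrow p"
      using D_pred[OF a pu] z 1 by auto
    have "p a = Some {c,a}" using c(2) by (simp add: arrow_def)
    then have "{c,a} = {a,b}" using z 1 by simp
    then have "c = b" using arrow_ne[OF c(2)] by (auto simp: doubleton_eq_iff)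
    then show ?thesis using c(1) by (simp add: D_def)
  next
    case 2
    have "b \<in> WW p" using ab by (auto simp: FF_def)
    then obtain u' where u': "u' \<in> UU p" "b \<in> D p u'" by (auto simp: WW_def)
    have pu': "p u' = None" using u' by (simp add: UU_def)
    obtain c where c: "(u',c) \<in> (arrow p)\<^sup>*" "(c,b) \<in> arrow p"
      using D_pred[OF u'(2) pu'] z 2 by auto
    have "p b = Some {c,b}" using c(2) by (simp add: arrow_def)
    then have "{c,b} = {a,b}" using z 2 by simp
    then have "c = a" using arrow_ne[OF c(2)] by (auto simp: doubleton_eq_iff)
    then have "(a,b) \<in> arrow p" using c(2) by simp
    then show ?thesis using a by (auto simp: D_def)
  qed
qed

lemma D_sub_WW: "u \<in> UU p \<Longrightarrow> D p u \<subseteq> WW p" by (auto simp: WW_def)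

lemma arrow_F:
  assumes u: "u \<in> UU p" and a: "a \<in> D p u" and ab: "(a,b) \<in> arrow p"
  shows "{a,b} \<in> FF p \<and> b \<in> D p u"
proof -
  have b: "b \<in> D p u" using a ab by (auto simp: D_def)
  have "{a,b} \<in> ran p" using ab by (auto simp: arrow_def ran_def)
  moreover have "{a,b} \<subseteq> WW p" using a b D_sub_WW[OF u] by auto
  ultimately show ?thesis using b by (simp add: FF_def)
qed

lemma D_conn:
  assumes u: "u \<in> UU p" and y: "y \<in> D p u"
  shows "(u,y) \<in> (adjR (FF p))\<^sup>*"
proof -
  have "(u,y) \<in> (arrow p)\<^sup>*" using y by (simp add: D_def)
  then show ?thesis
  proof (induction rule: rtrancl_induct)
    case base then show ?case by simp
  next
    case (step y z)
    have "y \<in> D p u" using step(1) by (simp add: D_def)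
    then have "{y,z} \<in> FF p" using arrow_F[OF u _ step(2)] by blast
    then have "(y,z) \<in> adjR (FF p)" by (simp add: adjR_def)
    then show ?case using step(3) by simp
  qed
qed

lemma comps_D:
  assumes C: "C \<in> components (WW p) (FF p)"
  shows "\<exists>u\<in>UU p. C = D p u"
proof -
  obtain w where w: "w \<in> WW p" "C = {y \<in> WW p. (w,y) \<in> (adjR (FF p))\<^sup>*}"
    using comp_class[OF C] by blast
  obtain u where u: "u \<in> UU p" "w \<in> D p u" using w(1) by (auto simp: WW_def)
  have "C \<subseteq> D p u"
  proof
    fix y assume "y \<in> C"
    then have "(w,y) \<in> (adjR (FF p))\<^sup>*" using w by simp
    then show "y \<in> D p u"
    proof (induction rule: rtrancl_induct)
      case base then show ?case using u by simp
    next
      case (step y z)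
      then show ?case using closure[OF _ u(1)] by (simp add: adjR_def)
    qed
  qed
  moreover have "D p u \<subseteq> C"
  proof
    fix y assume y: "y \<in> D p u"
    have "(u,y) \<in> (adjR (FF p))\<^sup>*" by (rule D_conn[OF u(1) y])
    moreover have "(w,u) \<in> (adjR (FF p))\<^sup>*" using adj_sym[OF D_conn[OF u]] .
    ultimately have "(w,y) \<in> (adjR (FF p))\<^sup>*" by simp
    moreover have "y \<in> WW p" using y D_sub_WW[OF u(1)] by blast
    ultimately show "y \<in> C" using w by simp
  qed
  ultimately show ?thesis using u by blast
qed

lemma forestFF: "forest (FF p)"
  unfolding forest_def
proof
  assume "\<exists>cs. is_cycle (FF p) cs"
  then obtain cs where cyc: "is_cycle (FF p) cs" by blast
  define k where "k = length cs"
  have k3: "3 \<le> k" and dist: "distinct cs"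
    and eF: "\<And>i. i < k \<Longrightarrow> {cs ! i, cs ! ((i + 1) mod k)} \<in> FF p"
    using cyc unfolding is_cycle_def k_def by auto
  define e where "e i = {cs ! i, cs ! ((i + 1) mod k)}" for i
  have eset: "e i \<subseteq> set cs" if "i < k" for i
  proof -
    have "(i+1) mod k < k" using k3 by simp
    then show ?thesis using that by (auto simp: e_def k_def)
  qed
  have own: "\<exists>w. p w = Some (e i)" if "i < k" for i
    using eF[OF that] unfolding e_def by (auto simp: FF_def ran_def)
  define w where "w i = (SOME w. p w = Some (e i))" for i
  have pw: "p (w i) = Some (e i)" if "i < k" for i
    unfolding w_def using own[OF that] by (rule someI_ex)
  have winj: "inj_on w {..<k}"
  proof (rule inj_onI)
    fix i j assume ij: "i \<in> {..<k}" "j \<in> {..<k}" "w i = w j"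
    then have "e i = e j" using pw by (metis lessThan_iff option.inject)
    then show "i = j" using cyc_edge_inj[OF dist] k3 ij unfolding e_def k_def by auto
  qed
  have wcs: "w ` {..<k} \<subseteq> set cs"
  proof
    fix c assume "c \<in> w ` {..<k}"
    then obtain i where i: "i < k" "c = w i" by blast
    have "c \<in> e i" using valid_val[OF pv pw[OF i(1)]] i by (simp add: val_def)
    then show "c \<in> set cs" using eset[OF i(1)] by blast
  qed
  have "card (w ` {..<k}) = card (set cs)"
    using card_image[OF winj] distinct_card[OF dist] by (simp add: k_def)
  then have weq: "w ` {..<k} = set cs" using card_subset_eq[OF _ wcs] by simp
  have pc: "\<exists>i<k. p c = Some (e i)" if cin: "c \<in> set cs" for c
  proof -
    obtain i where "i < k" "c = w i" using cin weq by blast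
    then show ?thesis using pw by blast
  qed
  have closed: "y \<in> set cs" if cy: "c \<in> set cs" "(y,c) \<in> arrow p" for c y
  proof -
    obtain i where i: "i < k" "p c = Some (e i)" using pc[OF cy(1)] by blast
    have "p c = Some {y,c}" using cy(2) by (simp add: arrow_def)
    then have "y \<in> e i" using i by auto
    then show ?thesis using eset[OF i(1)] by blast
  qed
  have c0: "cs ! 0 \<in> set cs" using k3 unfolding k_def by (intro nth_mem) linarith
  have "cs ! 0 \<in> WW p" using eF[of 0] k3 by (auto simp: FF_def)
  then obtain u where u: "u \<in> UU p" "cs ! 0 \<in> D p u" by (auto simp: WW_def)
  have "(u, cs ! 0) \<in> (arrow p)\<^sup>*" using u(2) by (simp add: D_def)
  then have "u \<in> set cs" using predclosed[OF _ c0] closed by blast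
  then obtain i where "i < k" "p u = Some (e i)" using pc by blast
  then show False using u(1) by (simp add: UU_def)
qed

lemma Inv_init: "Inv (components (WW p) (FF p)) (ran p) p"
  unfolding Inv_def
proof (intro conjI ballI impI)
  show "maxdom p" by (rule pm)
  show "ran p = ran p" ..
next
  fix C assume "C \<in> components (WW p) (FF p)"
  then obtain u where u: "u \<in> UU p" "C = D p u" using comps_D by blast
  have "u \<in> D p u" by (simp add: D_def)
  moreover have "p u = None" using u by (simp add: UU_def)
  ultimately show "\<exists>h\<in>C. p h = None \<and> C = D p h" using u by blast
next
  fix z assume "z \<in> V" "p z = None"
  then have "z \<in> WW p" by (auto simp: WW_def UU_def D_def)
  moreover have "\<Union>(components (WW p) (FF p)) = WW p"
    unfolding comps_def' by (rule Union_quotient[OF equiv_comp])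
  ultimately show "z \<in> \<Union>(components (WW p) (FF p))" by simp
qed

end

lemma comps_fin: "finite W \<Longrightarrow> finite (components W F)"
  unfolding comps_def' by (rule finite_quotient) auto

lemma comps_disj: "\<forall>C1\<in>components W F. \<forall>C2\<in>components W F. C1 \<noteq> C2 \<longrightarrow> C1 \<inter> C2 = {}"
  unfolding comps_def' using quotient_disj[OF equiv_comp] by blast

end



context ctx begin

lemma f_add: "u \<in> V \<Longrightarrow> X \<subseteq> E \<Longrightarrow> f u X = (\<Sum>e\<in>X. f u {e})"
  using inst unfolding additive_01_instance_def by blast
lemma f_zo: "u \<in> V \<Longrightarrow> e \<in> E \<Longrightarrow> f u {e} \<in> {0,1}"
  using inst unfolding additive_01_instance_def by blast
lemma f_mono: "u \<in> V \<Longrightarrow> X \<subseteq> Y \<Longrightarrow> Y \<subseteq> E \<Longrightarrow> f u X \<le> f u Y"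
  using inst unfolding additive_01_instance_def graphical_instance_def
  by (meson order_trans)
lemma f_nonneg: "u \<in> V \<Longrightarrow> X \<subseteq> E \<Longrightarrow> 0 \<le> f u X"
  using inst unfolding additive_01_instance_def graphical_instance_def by blast
lemma f_inc: "u \<in> V \<Longrightarrow> X \<subseteq> E \<Longrightarrow> f u X = f u (X \<inter> incident_edges E u)"
  using inst unfolding additive_01_instance_def graphical_instance_def by blast
lemma f_empty: "u \<in> V \<Longrightarrow> f u {} = 0"
  using f_add[of u "{}"] by simp

lemma f_le1: assumes "u \<in> V" "Y \<subseteq> E" "Y \<subseteq> {e1}" shows "f u Y \<le> 1"
proof (cases "Y = {}")
  case True then show ?thesis using f_empty[OF assms(1)] by simp
next
  case False then have "Y = {e1}" using assms(3) by blast
  then show ?thesis using f_zo[OF assms(1), of e1] assms(2) by auto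
qed

lemma f_zero: assumes "u \<in> V" "Y \<subseteq> E" "Y \<subseteq> {e1}" "e1 \<in> Y \<Longrightarrow> f u {e1} \<noteq> 1"
  shows "f u Y = 0"
proof (cases "Y = {}")
  case True then show ?thesis using f_empty[OF assms(1)] by simp
next
  case False then have Y: "Y = {e1}" using assms(3) by blast
  then have "f u {e1} \<in> {0,1}" using f_zo[OF assms(1), of e1] assms(2) by auto
  then show ?thesis using assms(4) Y by auto
qed

lemma final:
  assumes I: "Inv Cs R0 q" and roots: "\<forall>C\<in>Cs. q (x C) = None" and xC: "\<forall>C\<in>Cs. x C \<in> C"
    and FR: "\<And>a b. {a,b} \<in> R0 \<Longrightarrow> a \<in> \<Union>Cs \<Longrightarrow> b \<in> \<Union>Cs \<Longrightarrow> {a,b} \<in> F"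
    and ind: "independent E S" and Sdef: "S = (\<Union>C\<in>Cs. nbrs F (x C))"
  shows "\<exists>h. EFX_orientation V E f h"
proof -
  have mq: "maxdom q" and vq: "valid q" and ranq: "ran q = R0"
    using I by (auto simp: Inv_def maxdom_def)
  have hole_root: "\<exists>C\<in>Cs. r = x C \<and> C = D q r" if r: "r \<in> V" "q r = None" for r
  proof -
    have "r \<in> \<Union>Cs" using I r by (auto simp: Inv_def)
    then obtain C where C: "C \<in> Cs" "r \<in> C" by blast
    obtain h where h: "h \<in> C" "q h = None" "C = D q h" using I C(1) by (auto simp: Inv_def)
    have "r = h" using hole_unique[OF h(2) r(2)] C(2) h(3) by simp
    moreover have "x C = h" using hole_unique[OF h(2) roots[rule_format, OF C(1)]] xC C(1) h(3) by simp
    ultimately show ?thesis using C h by blast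
  qed
  have key2: "\<exists>y. y \<noteq> r \<and> e = {r,y} \<and> q y = Some e \<and> y \<in> S"
    if r: "r \<in> V" "q r = None" and ve: "val r e" for r e
  proof -
    obtain y where y: "y \<noteq> r" "e = {r,y}" "q y = Some e" "(r,y) \<in> arrow q"
      using maxdom_hole[OF mq r(2) ve] by blast
    obtain C where C: "C \<in> Cs" "r = x C" "C = D q r" using hole_root[OF r] by blast
    have yC: "y \<in> C" using y(4) C(3) by (auto simp: D_def)
    have rC: "r \<in> C" using C xC by blast
    have "{r,y} \<in> R0" using y(2,3) ranq by (auto simp: ran_def)
    then have "{r,y} \<in> F" using FR yC rC C(1) by blast
    then have "y \<in> S" using Sdef C(1,2) by (auto simp: nbrs_def)
    then show ?thesis using y by blast
  qed
  have exz: "\<exists>z. z \<in> e \<and> z \<notin> S" if "e \<in> E" for e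
    using ind that unfolding independent_def by blast
  define h where "h e = (if \<exists>w. q w = Some e then (THE w. q w = Some e) else (SOME z. z \<in> e \<and> z \<notin> S))" for e
  have h_own: "h e = w" if "q w = Some e" for w e
  proof -
    have "(THE w. q w = Some e) = w"
      using that valid_inj[OF vq] by (intro the_equality) auto
    then show ?thesis using that by (auto simp: h_def)
  qed
  have h_E: "h e \<in> e" if eE: "e \<in> E" for e
  proof (cases "\<exists>w. q w = Some e")
    case True
    then obtain w where w: "q w = Some e" by blast
    then show ?thesis using h_own[OF w] valid_val[OF vq w] by (simp add: val_def)
  next
    case False
    then have "h e = (SOME z. z \<in> e \<and> z \<notin> S)" by (simp add: h_def)
    moreover have "(SOME z. z \<in> e \<and> z \<notin> S) \<in> e" using someI_ex[OF exz[OF eE]] by blast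
    ultimately show ?thesis by simp
  qed
  have h_S: "\<exists>w. q w = Some e" if eE: "e \<in> E" and hS: "h e \<in> S" for e
  proof (rule ccontr)
    assume "\<not> (\<exists>w. q w = Some e)"
    then have "h e = (SOME z. z \<in> e \<and> z \<notin> S)" by (simp add: h_def)
    moreover have "(SOME z. z \<in> e \<and> z \<notin> S) \<notin> S" using someI_ex[OF exz[OF eE]] by blast
    ultimately show False using hS by simp
  qed
  have bundle_S: "e \<in> bundle_of E h v \<Longrightarrow> q v = Some e" if vS: "v \<in> S" for v e
  proof -
    assume eb: "e \<in> bundle_of E h v"
    then have eE: "e \<in> E" and he: "h e = v" by (auto simp: bundle_of_def)
    obtain w where w: "q w = Some e" using h_S[OF eE] he vS by auto
    then show "q v = Some e" using h_own[OF w] he by simp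
  qed
  have ori: "orientation E h" unfolding orientation_def using h_E by blast
  have efx: "f u (bundle_of E h u) \<ge> f u (bundle_of E h v - {g})"
    if uv: "u \<in> V" "v \<in> V" and gb: "g \<in> bundle_of E h v" for u v g
  proof -
    let ?X = "bundle_of E h v - {g}"
    let ?Xi = "?X \<inter> incident_edges E u"
    have bE: "bundle_of E h w \<subseteq> E" for w by (auto simp: bundle_of_def)
    have XE: "?X \<subseteq> E" using bE by blast
    have XiE: "?Xi \<subseteq> E" using XE by blast
    have fX: "f u ?X = f u ?Xi" using f_inc[OF uv(1) XE] .
    show ?thesis
    proof (cases "u = v")
      case True then show ?thesis using f_mono[OF uv(1) _ bE] by blast
    next
      case False
      have Xi1: "?Xi \<subseteq> {{u,v}}"
      proof
        fix e assume e: "e \<in> ?Xi"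
        then have eE: "e \<in> E" and ue: "u \<in> e" and he: "h e = v"
          by (auto simp: bundle_of_def incident_edges_def)
        have "v \<in> e" using h_E[OF eE] he by simp
        then show "e \<in> {{u,v}}" using sg_two[OF sg eE ue _ False] by simp
      qed
      show ?thesis
      proof (cases "q u")
        case (Some e0)
        have ve0: "val u e0" using valid_val[OF vq Some] .
        then have e0E: "e0 \<in> E" and f1: "f u {e0} = 1" by (auto simp: val_def)
        have "e0 \<in> bundle_of E h u" using h_own[OF Some] e0E by (simp add: bundle_of_def)
        then have "f u {e0} \<le> f u (bundle_of E h u)" using f_mono[OF uv(1) _ bE] by blast
        moreover have "f u ?Xi \<le> 1" using f_le1[OF uv(1) XiE Xi1] .
        ultimately show ?thesis using fX f1 by simp
      next
        case None
        have "f u ?Xi = 0"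
        proof (rule f_zero[OF uv(1) XiE Xi1])
          assume uvX: "{u,v} \<in> ?Xi"
          show "f u {{u,v}} \<noteq> 1"
          proof
            assume f1: "f u {{u,v}} = 1"
            have uvE: "{u,v} \<in> E" using uvX by (auto simp: bundle_of_def)
            have "val u {u,v}" using f1 uvE by (simp add: val_def)
            then obtain y where y: "y \<noteq> u" "{u,v} = {u,y}" "q y = Some {u,v}" "y \<in> S"
              using key2[OF uv(1) None] by blast
            have "y = v" using y(1,2) by (auto simp: doubleton_eq_iff)
            then have vS: "v \<in> S" using y by simp
            have "q v = Some g" using bundle_S[OF vS gb] .
            moreover have "q v = Some {u,v}" using bundle_S[OF vS] uvX by blast
            ultimately have "g = {u,v}" by simp
            then show False using uvX by simp
          qed
        qed
        then show ?thesis using fX f_nonneg[OF uv(1) bE] by simp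
      qed
    qed
  qed
  have "EFX_orientation V E f h" unfolding EFX_orientation_def using ori efx by blast
  then show ?thesis by blast
qed

end

lemma dir2:
  assumes sg: "simple_graph V E"
    and cond: "\<forall>W F. subgraph W F V E \<and> forest F \<longrightarrow>
       (\<exists>x. (\<forall>C\<in>components W F. x C \<in> C) \<and>
            independent E (\<Union>C\<in>components W F. nbrs F (x C)))"
  shows "strongly_EFX_orientable_01 V E"
  unfolding strongly_EFX_orientable_01_def
proof (intro allI impI)
  fix f assume inst: "additive_01_instance V E f"
  interpret ctx V E f using sg inst by (unfold_locales)
  obtain p where pm: "maxdom p" using maxdom_ex by blast
  let ?W = "WW p" let ?F = "FF p" let ?Cs = "components ?W ?F"
  obtain x where xC: "\<forall>C\<in>?Cs. x C \<in> C" and ind: "independent E (\<Union>C\<in>?Cs. nbrs ?F (x C))"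
    using cond sub[OF pm] forestFF[OF pm] by blast
  have finW: "finite ?W" using WW_V[OF pm] finV finite_subset by blast
  obtain q where q: "Inv ?Cs (ran p) q" "\<forall>C\<in>?Cs. q (x C) = None"
    using roots[OF comps_disj comps_fin[OF finW] xC Inv_init[OF pm]] by blast
  have UC: "\<Union>?Cs = ?W" unfolding comps_def' by (rule Union_quotient[OF equiv_comp])
  have FR: "{a,b} \<in> ?F" if "{a,b} \<in> ran p" "a \<in> \<Union>?Cs" "b \<in> \<Union>?Cs" for a b
    using that UC by (auto simp: FF_def)
  show "\<exists>h. EFX_orientation V E f h"
    by (rule final[OF q(1) q(2) xC FR ind refl])
qed

theorem mainTheorem1:
  fixes V :: "'a set" and E :: "'a set set"
  assumes "simple_graph V E"
  shows "strongly_EFX_orientable_01 V E \<longleftrightarrow>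
    (\<forall>W F. subgraph W F V E \<and> forest F \<longrightarrow>
       (\<exists>x. (\<forall>C\<in>components W F. x C \<in> C) \<and>
            independent E (\<Union>C\<in>components W F. nbrs F (x C))))"
  using dir1[OF assms] dir2[OF assms] by blast


end
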